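(* Let $n\ge 3$ and $v\in A_n$. Let $v=v_3\cdots v_n$ be the unique factorization with $v_i\in R_i$ for $3\le i\le n$, and set $\hat\ell(v)=\#\{i\mid v_i\neq e\}$. Then $\hat\ell(v)=\ell_{T(A_n)}(v)$.
   Context: $A_n$ is the alternating group on $\{1,\dots,n\}$, $e$ the identity, and products are compositions of permutations with the rightmost factor applied first; $A_i$ for $i\le n$ is the subgroup fixing $i+1,\dots,n$. $T(A_n)=\{(1\,2)(i\,j)\mid 1\le i<j\le n\}$, and for $v\in A_n$, $\ell_{T(A_n)}(v)=\min\{k\ge 0\mid v=t_1\cdots t_k,\ t_i\in T(A_n)\}$. For $3\le i\le n$, $R_i=\{(1\,2)(k\,i)\mid 1\le k<i\}\cup\{e\}$. Every $v\in A_n$ has a unique factorization $v=v_3\cdots v_n$ with $v_i\in R_i$. *)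

theory Defs
  imports "HOL-Combinatorics.Combinatorics"
begin

(* Permutations of {1..n} are functions nat => nat; the product u v is
   function composition u \<circ> v (rightmost factor applied first). *)

definition alt_group :: "nat \<Rightarrow> (nat \<Rightarrow> nat) set" where
  "alt_group n = {p. p permutes {1..n} \<and> evenperm p}"

definition T_gens :: "nat \<Rightarrow> (nat \<Rightarrow> nat) set" where
  "T_gens n = {transpose 1 2 \<circ> transpose i j | i j. 1 \<le> i \<and> i < j \<and> j \<le> n}"

definition list_prod :: "(nat \<Rightarrow> nat) list \<Rightarrow> (nat \<Rightarrow> nat)" where
  "list_prod ts = foldr (\<circ>) ts id"

definition T_length :: "nat \<Rightarrow> (nat \<Rightarrow> nat) \<Rightarrow> nat" where
  "T_length n v = (LEAST k. \<exists>ts. length ts = k \<and> set ts \<subseteq> T_gens n \<and> v = list_prod ts)"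

definition R_set :: "nat \<Rightarrow> (nat \<Rightarrow> nat) set" where
  "R_set i = {transpose 1 2 \<circ> transpose k i | k. 1 \<le> k \<and> k < i} \<union> {id}"

end

theory Submission
  imports Defs
begin

abbreviation P :: "nat \<Rightarrow> (nat \<Rightarrow> nat \<Rightarrow> nat) \<Rightarrow> nat \<Rightarrow> nat" where
  "P n f \<equiv> list_prod (map f [3..<n+1])"

definition cnt :: "nat \<Rightarrow> (nat \<Rightarrow> nat \<Rightarrow> nat) \<Rightarrow> nat" where
  "cnt n f = card {i \<in> {3..n}. f i \<noteq> id}"

definition Rc :: "nat \<Rightarrow> (nat \<Rightarrow> nat \<Rightarrow> nat) \<Rightarrow> bool" where
  "Rc n f \<longleftrightarrow> (\<forall>i. 3 \<le> i \<longrightarrow> i \<le> n \<longrightarrow> f i \<in> R_set i)"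

lemma list_prod_snoc: "list_prod (xs @ [x]) = list_prod xs \<circ> x"
proof -
  have "list_prod (xs @ ys) = list_prod xs \<circ> list_prod ys" for ys
    by (induction xs) (simp_all add: list_prod_def comp_assoc)
  from this[of "[x]"] show ?thesis by (simp add: list_prod_def)
qed

lemma P_Suc: "3 \<le> Suc n \<Longrightarrow> P (Suc n) f = P n f \<circ> f (Suc n)"
  by (simp add: list_prod_snoc)

lemma P_small: "n < 3 \<Longrightarrow> P n f = id"
  by (simp add: list_prod_def)

lemma P_cong: "(\<And>i. 3 \<le> i \<Longrightarrow> i \<le> n \<Longrightarrow> f i = g i) \<Longrightarrow> P n f = P n g"
proof -
  assume "\<And>i. 3 \<le> i \<Longrightarrow> i \<le> n \<Longrightarrow> f i = g i"
  then show ?thesis by (intro arg_cong[where f=list_prod] map_cong) auto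
qed

lemma cnt_Suc: "3 \<le> Suc n \<Longrightarrow> cnt (Suc n) f = cnt n f + (if f (Suc n) \<noteq> id then 1 else 0)"
proof -
  assume "3 \<le> Suc n"
  then have "{i \<in> {3..Suc n}. f i \<noteq> id} = {i \<in> {3..n}. f i \<noteq> id} \<union> (if f (Suc n) \<noteq> id then {Suc n} else {})"
    by (auto simp: le_Suc_eq)
  then show ?thesis unfolding cnt_def by (cases "f (Suc n) = id") auto
qed

lemma cnt_cong: "(\<And>i. 3 \<le> i \<Longrightarrow> i \<le> n \<Longrightarrow> f i = g i) \<Longrightarrow> cnt n f = cnt n g"
  unfolding cnt_def by (intro arg_cong[where f=card]) auto

lemma Rc_upd: "Rc n f \<Longrightarrow> r \<in> R_set (Suc n) \<Longrightarrow> Rc (Suc n) (f(Suc n := r))"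
  unfolding Rc_def by (auto simp: le_Suc_eq)

lemma Rc_Suc: "Rc (Suc n) f \<Longrightarrow> Rc n f"
  unfolding Rc_def by auto

lemma T_gensI: "x \<noteq> y \<Longrightarrow> 1 \<le> x \<Longrightarrow> 1 \<le> y \<Longrightarrow> x \<le> n \<Longrightarrow> y \<le> n \<Longrightarrow>
   transpose 1 2 \<circ> transpose x y \<in> T_gens n"
  unfolding T_gens_def
  apply (cases "x < y")
   apply blast
  apply (rule CollectI)
  apply (rule exI[where x=y], rule exI[where x=x])
  apply (auto simp: transpose_commute)
  done

lemma c_range: "1 \<le> x \<Longrightarrow> x \<le> n \<Longrightarrow> 2 \<le> n \<Longrightarrow> 1 \<le> transpose 1 2 x \<and> transpose (1::nat) 2 x \<le> n"
  by (auto simp: transpose_def)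

lemma tconj: "transpose p q \<circ> transpose x y = transpose (transpose p q x) (transpose p q y) \<circ> transpose p q"
  using transpose_comp_eq[of "transpose p q" "transpose p q x" "transpose p q y"] by simp

lemma tinv2: "transpose p q \<circ> (transpose p q \<circ> f) = f"
  by (simp flip: comp_assoc)

lemma cm: "(3::nat) \<le> m \<Longrightarrow> transpose 1 2 m = m" by simp

lemma step1: "(3::nat) \<le> m \<Longrightarrow> transpose 1 2 \<circ> transpose k m \<circ> (transpose 1 2 \<circ> g) = transpose (transpose 1 2 k) m \<circ> g"
  using tconj[of "1::nat" 2 k m] by (simp add: comp_assoc tinv2)

lemma step2: "transpose 1 2 \<circ> transpose (transpose 1 2 a) (transpose (1::nat) 2 b) \<circ> (transpose 1 2 \<circ> g) = transpose a b \<circ> g"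
  using tconj[of "1::nat" 2 "transpose 1 2 a" "transpose 1 2 b"] by (simp add: comp_assoc tinv2)

lemma step3: "transpose 1 2 \<circ> transpose (transpose 1 2 a) k \<circ> (transpose 1 2 \<circ> g) = transpose a (transpose (1::nat) 2 k) \<circ> g"
  using tconj[of "1::nat" 2 "transpose 1 2 a" k] by (simp add: comp_assoc tinv2)

lemma permC:
  fixes k a b m :: nat
  assumes "1 \<le> k" "k < m" "1 \<le> a" "a < b" "b < m" "3 \<le> m"
  shows "transpose 1 2 \<circ> transpose k m \<circ> (transpose 1 2 \<circ> transpose a b) =
    (transpose 1 2 \<circ> transpose (transpose 1 2 a) (transpose 1 2 b)) \<circ>
    (transpose 1 2 \<circ> transpose (transpose a b (transpose 1 2 k)) m)"
proof -
  let ?c = "transpose (1::nat) 2"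
  have bm: "transpose a b m = m" using assms by simp
  have "?c \<circ> transpose k m \<circ> (?c \<circ> transpose a b) = transpose (?c k) m \<circ> transpose a b"
    using assms by (simp only: step1)
  also have "\<dots> = transpose a b \<circ> transpose (transpose a b (?c k)) m"
    using tconj[of a b "transpose a b (?c k)" m] bm by simp
  also have "\<dots> = (?c \<circ> transpose (?c a) (?c b)) \<circ> (?c \<circ> transpose (transpose a b (?c k)) m)"
    by (simp only: step2)
  finally show ?thesis .
qed

lemma permD:
  fixes k a m :: nat
  assumes "1 \<le> k" "k < m" "1 \<le> a" "a < m" "3 \<le> m" "transpose 1 2 k = a"
  shows "transpose 1 2 \<circ> transpose k m \<circ> (transpose 1 2 \<circ> transpose a m) = id"
  using assms by (simp only: step1) simp

lemma permE:
  fixes k a m :: nat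
  assumes "1 \<le> k" "k < m" "1 \<le> a" "a < m" "3 \<le> m" "transpose 1 2 k \<noteq> a"
  shows "transpose 1 2 \<circ> transpose k m \<circ> (transpose 1 2 \<circ> transpose a m) =
    (transpose 1 2 \<circ> transpose (transpose 1 2 a) k) \<circ> (transpose 1 2 \<circ> transpose (transpose 1 2 k) m)"
proof -
  let ?c = "transpose (1::nat) 2"
  let ?y = "?c k"
  have ym: "?y \<noteq> m" using assms by (auto simp: transpose_def)
  have "?c \<circ> transpose k m \<circ> (?c \<circ> transpose a m) = transpose ?y m \<circ> transpose a m"
    using assms by (simp only: step1)
  also have "\<dots> = transpose a ?y \<circ> transpose ?y m"
    using tconj[of ?y m a m] assms ym by simp
  also have "\<dots> = (?c \<circ> transpose (?c a) k) \<circ> (?c \<circ> transpose ?y m)"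
    by (simp only: step3)
  finally show ?thesis .
qed

lemma c_bound: "1 \<le> x \<Longrightarrow> x \<le> n \<Longrightarrow> 2 \<le> n \<Longrightarrow> 1 \<le> transpose (1::nat) 2 x \<and> transpose (1::nat) 2 x \<le> n"
  by (auto simp: transpose_def)

lemma finish:
  assumes "3 \<le> Suc n" "f (Suc n) \<circ> t = g \<circ> r'" "r' \<in> R_set (Suc n)" "Rc n f''"
    "P n f \<circ> g = P n f''"
    "cnt n f'' + (if r' \<noteq> id then 1 else 0) \<le> cnt n f + (if f (Suc n) \<noteq> id then 1 else 0) + 1"
  shows "\<exists>f'. Rc (Suc n) f' \<and> P (Suc n) f \<circ> t = P (Suc n) f' \<and> cnt (Suc n) f' \<le> cnt (Suc n) f + 1"
proof (intro exI conjI)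
  let ?f = "f''(Suc n := r')"
  show "Rc (Suc n) ?f" using assms Rc_upd by blast
  have "P n ?f = P n f''" by (rule P_cong) auto
  then have "P (Suc n) ?f = P n f'' \<circ> r'" using P_Suc[OF assms(1), of ?f] by simp
  also have "\<dots> = P n f \<circ> (g \<circ> r')" unfolding assms(5)[symmetric] by (rule comp_assoc)
  also have "\<dots> = P (Suc n) f \<circ> t" using assms(2) P_Suc[OF assms(1), of f] by (simp add: comp_assoc)
  finally show "P (Suc n) f \<circ> t = P (Suc n) ?f" by simp
  have "cnt n ?f = cnt n f''" by (rule cnt_cong) auto
  then show "cnt (Suc n) ?f \<le> cnt (Suc n) f + 1"
    using cnt_Suc[OF assms(1), of ?f] cnt_Suc[OF assms(1), of f] assms(6) by simp
qed

lemma stepA: "Rc n f \<Longrightarrow> t \<in> T_gens n \<Longrightarrow>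
  \<exists>f'. Rc n f' \<and> P n f \<circ> t = P n f' \<and> cnt n f' \<le> cnt n f + 1"
proof (induction n arbitrary: f t)
  case 0
  then show ?case by (auto simp: T_gens_def)
next
  case (Suc n)
  let ?c = "transpose (1::nat) 2"
  from Suc.prems(2) obtain a b where t: "t = ?c \<circ> transpose a b" "1 \<le> a" "a < b" "b \<le> Suc n"
    by (auto simp: T_gens_def)
  show ?case
  proof (cases "Suc n < 3")
    case True
    then have "a = 1" "b = 2" using t by auto
    then have "t = ?c \<circ> transpose 1 2" using t(1) by (simp only:)
    then have "t = id" by simp
    then show ?thesis using Suc.prems by auto
  next
    case False
    then have m3: "3 \<le> Suc n" and n2: "2 \<le> n" by auto
    have Rn: "Rc n f" using Suc.prems(1) Rc_Suc by blast
    have "f (Suc n) \<in> R_set (Suc n)" using Suc.prems(1) m3 unfolding Rc_def by auto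
    then consider (I) "f (Suc n) = id" | (K) k where "f (Suc n) = ?c \<circ> transpose k (Suc n)" "1 \<le> k" "k < Suc n"
      unfolding R_set_def by blast
    then show ?thesis
    proof cases
      case I
      show ?thesis
      proof (cases "b = Suc n")
        case True
        have r': "t \<in> R_set (Suc n)" using t True unfolding R_set_def by blast
        show ?thesis
          by (rule finish[where g=id, OF m3 _ r' Rn]) (use I t True in auto)
      next
        case False
        then have "b \<le> n" using t by simp
        then have "t \<in> T_gens n" using t unfolding T_gens_def by blast
        from Suc.IH[OF Rn this] obtain f'' where "Rc n f''" "P n f \<circ> t = P n f''" "cnt n f'' \<le> cnt n f + 1"
          by blast
        then show ?thesis
          by (intro finish[where f=f and t=t and g=t and r'=id and f''=f'', OF m3]) (use I in \<open>auto simp: R_set_def\<close>)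
      qed
    next
      case K
      have ckb: "1 \<le> ?c k \<and> ?c k \<le> n" using c_bound[of k n] K n2 by simp
      have Kne: "f (Suc n) \<noteq> id"
      proof
        assume "f (Suc n) = id"
        then have "(?c \<circ> transpose k (Suc n)) (Suc n) = Suc n" using K by simp
        then show False using ckb by simp
      qed
      show ?thesis
      proof (cases "b = Suc n")
        case bm: True
        show ?thesis
        proof (cases "?c k = a")
          case True
          have "f (Suc n) \<circ> t = id \<circ> id"
            using permD[of k "Suc n" a] K t bm True m3 by simp
          then show ?thesis
            by (intro finish[where f=f and t=t and g=id and r'=id, OF m3 _ _ Rn]) (auto simp: R_set_def)
        next
          case False
          let ?g = "?c \<circ> transpose (?c a) k"
          let ?r = "?c \<circ> transpose (?c k) (Suc n)"
          have eq: "f (Suc n) \<circ> t = ?g \<circ> ?r"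
            using permE[of k "Suc n" a] K t bm False m3 by simp
          have ca: "1 \<le> ?c a \<and> ?c a \<le> n" using c_bound[of a n] t bm n2 by simp
          have ck: "1 \<le> ?c k \<and> ?c k \<le> n" using c_bound[of k n] K n2 by simp
          have "?c a \<noteq> k" using False by (auto simp: transpose_eq_iff)
          then have g: "?g \<in> T_gens n" using ca K by (intro T_gensI) auto
          have r: "?r \<in> R_set (Suc n)" using ck unfolding R_set_def by auto
          from Suc.IH[OF Rn g] obtain f'' where "Rc n f''" "P n f \<circ> ?g = P n f''" "cnt n f'' \<le> cnt n f + 1"
            by blast
          then show ?thesis
            by (intro finish[where f=f and t=t, OF m3 eq r]) (use K Kne in auto)
        qed
      next
        case False
        then have bn: "b < Suc n" using t by simp
        let ?k2 = "transpose a b (?c k)"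
        let ?g = "?c \<circ> transpose (?c a) (?c b)"
        let ?r = "?c \<circ> transpose ?k2 (Suc n)"
        have eq: "f (Suc n) \<circ> t = ?g \<circ> ?r"
          using permC[of k "Suc n" a b] K t bn m3 by simp
        have ca: "1 \<le> ?c a \<and> ?c a \<le> n" using c_bound[of a n] t bn n2 by simp
        have cb: "1 \<le> ?c b \<and> ?c b \<le> n" using c_bound[of b n] t bn n2 by simp
        have ck: "1 \<le> ?c k \<and> ?c k \<le> n" using c_bound[of k n] K n2 by simp
        have "?c a \<noteq> ?c b" using t by (auto simp: transpose_eq_iff)
        then have g: "?g \<in> T_gens n" using ca cb by (intro T_gensI) auto
        have "1 \<le> ?k2 \<and> ?k2 \<le> n" using ck t bn by (auto simp: transpose_def)
        then have r: "?r \<in> R_set (Suc n)" unfolding R_set_def by auto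
        from Suc.IH[OF Rn g] obtain f'' where "Rc n f''" "P n f \<circ> ?g = P n f''" "cnt n f'' \<le> cnt n f + 1"
          by blast
        then show ?thesis
          by (intro finish[where f=f and t=t, OF m3 eq r]) (use K Kne in auto)
      qed
    qed
  qed
qed


lemma list_prod_ids: "list_prod (map (\<lambda>_. id) xs) = id"
  by (induction xs) (simp_all add: list_prod_def)

lemma stepB: "set ts \<subseteq> T_gens n \<Longrightarrow> \<exists>f. Rc n f \<and> list_prod ts = P n f \<and> cnt n f \<le> length ts"
proof (induction ts rule: rev_induct)
  case Nil
  have "Rc n (\<lambda>_. id)" unfolding Rc_def R_set_def by auto
  moreover have "P n (\<lambda>_. id) = id"
    using list_prod_ids[of "[3..<n+1]"] by (simp only: map_map comp_def)
  moreover have "cnt n (\<lambda>_. id) = 0" unfolding cnt_def by simp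
  moreover have "list_prod [] = id" by (simp add: list_prod_def)
  ultimately show ?case by (intro exI[of _ "\<lambda>_. id"] conjI) (simp_all only: list.size le_refl)
next
  case (snoc x xs)
  then obtain f where f: "Rc n f" "list_prod xs = P n f" "cnt n f \<le> length xs" by auto
  from snoc.prems have "x \<in> T_gens n" by auto
  from stepA[OF f(1) this] obtain f' where "Rc n f'" "P n f \<circ> x = P n f'" "cnt n f' \<le> cnt n f + 1"
    by blast
  then show ?case using f by (intro exI[of _ f']) (auto simp: list_prod_snoc)
qed

lemma R_bij: "r \<in> R_set i \<Longrightarrow> bij r"
  unfolding R_set_def by (auto intro: bij_comp)

lemma P_bij: "Rc n f \<Longrightarrow> bij (P n f)"
proof (induction n)
  case 0 then show ?case by (simp add: list_prod_def bij_def)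
next
  case (Suc n)
  show ?case
  proof (cases "3 \<le> Suc n")
    case True
    have "bij (f (Suc n))" using Suc.prems True R_bij unfolding Rc_def by blast
    moreover have "bij (P n f)" using Suc Rc_Suc by blast
    ultimately have "bij (P n f \<circ> f (Suc n))" by (rule bij_comp)
    then show ?thesis by (simp only: P_Suc[OF True])
  next
    case False then show ?thesis by (simp add: list_prod_def bij_def)
  qed
qed

lemma R_fix: "r \<in> R_set i \<Longrightarrow> i < x \<Longrightarrow> r x = x"
  unfolding R_set_def by (auto simp: transpose_def)

lemma P_fix: "Rc n f \<Longrightarrow> n < x \<Longrightarrow> P n f x = x"
proof (induction n)
  case 0 then show ?case by (simp add: list_prod_def)
next
  case (Suc n)
  show ?case
  proof (cases "3 \<le> Suc n")
    case True
    have "f (Suc n) x = x" using Suc.prems True R_fix unfolding Rc_def by blast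
    moreover have "P n f x = x" using Suc Rc_Suc by simp
    ultimately show ?thesis using P_Suc[OF True] by simp
  next
    case False then show ?thesis by (simp add: list_prod_def)
  qed
qed

lemma R_pre:
  assumes "3 \<le> m" "r \<in> R_set m" "r x = m"
  shows "r = (if x = m then id else transpose 1 2 \<circ> transpose x m)"
proof -
  from assms(2) consider (I) "r = id" | (K) k where "r = transpose 1 2 \<circ> transpose k m" "1 \<le> k" "k < m"
    unfolding R_set_def by blast
  then show ?thesis
  proof cases
    case I then show ?thesis using assms by simp
  next
    case K
    have "transpose 1 2 (transpose k m x) = m" using K assms by simp
    then have "transpose k m x = m" using assms(1) by (auto simp: transpose_def split: if_splits)
    then have "x = k" using K by (auto simp: transpose_def split: if_splits)
    then show ?thesis using K by simp
  qed
qed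

lemma R_det: "3 \<le> m \<Longrightarrow> r \<in> R_set m \<Longrightarrow> r' \<in> R_set m \<Longrightarrow> r x = m \<Longrightarrow> r' x = m \<Longrightarrow> r = r'"
  using R_pre[of m r x] R_pre[of m r' x] by simp

lemma uniq: "Rc n f \<Longrightarrow> Rc n g \<Longrightarrow> P n f = P n g \<Longrightarrow> 3 \<le> i \<Longrightarrow> i \<le> n \<Longrightarrow> f i = g i"
proof (induction n arbitrary: i)
  case 0 then show ?case by simp
next
  case (Suc n)
  have m3: "3 \<le> Suc n" using Suc.prems(4,5) by linarith
  have Rf: "Rc n f" and Rg: "Rc n g" using Suc.prems(1,2) Rc_Suc by blast+
  have rf: "f (Suc n) \<in> R_set (Suc n)" and rg: "g (Suc n) \<in> R_set (Suc n)"
    using Suc.prems(1,2) m3 unfolding Rc_def by blast+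
  have eq: "P n f \<circ> f (Suc n) = P n g \<circ> g (Suc n)"
    using Suc.prems(3) unfolding P_Suc[OF m3, of f] P_Suc[OF m3, of g] .
  have sf: "surj (f (Suc n))" using R_bij[OF rf] bij_is_surj by blast
  from surjD[OF sf, of "Suc n"] obtain x where x: "f (Suc n) x = Suc n" by metis
  have e1: "P n f (f (Suc n) x) = P n g (g (Suc n) x)"
    using fun_cong[OF eq, of x] by (simp only: comp_apply)
  have e2: "P n f (f (Suc n) x) = Suc n" unfolding x by (rule P_fix[OF Rf lessI])
  have e3: "P n g (Suc n) = Suc n" by (rule P_fix[OF Rg lessI])
  have "P n g (g (Suc n) x) = P n g (Suc n)" using e1 e2 e3 by argo
  then have gx: "g (Suc n) x = Suc n" using bij_is_inj[OF P_bij[OF Rg]] by (rule injD[rotated])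
  have same: "f (Suc n) = g (Suc n)" by (rule R_det[OF m3 rf rg x gx])
  have "P n f = P n g"
  proof
    fix y
    from surjD[OF sf, of y] obtain z where z: "y = f (Suc n) z" by metis
    show "P n f y = P n g y" using fun_cong[OF eq, of z] unfolding z comp_apply same .
  qed
  note IH = Suc.IH[OF Rf Rg this]
  show ?case
  proof (cases "i = Suc n")
    case True then show ?thesis using same by simp
  next
    case False then show ?thesis using IH Suc.prems(4,5) by simp
  qed
qed

lemma filter_id_prod: "list_prod (filter (\<lambda>h. h \<noteq> id) xs) = list_prod xs"
  by (induction xs) (simp_all add: list_prod_def)

lemma witness:
  assumes "Rc n f"
  shows "\<exists>ts. length ts = cnt n f \<and> set ts \<subseteq> T_gens n \<and> P n f = list_prod ts"
proof (intro exI conjI)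
  let ?ts = "filter (\<lambda>h. h \<noteq> id) (map f [3..<n+1])"
  show "P n f = list_prod ?ts" by (simp only: filter_id_prod)
  have "length ?ts = length (filter (\<lambda>i. f i \<noteq> id) [3..<n+1])"
    by (simp add: filter_map comp_def)
  also have "\<dots> = card (set (filter (\<lambda>i. f i \<noteq> id) [3..<n+1]))"
    by (rule distinct_card[symmetric]) simp
  also have "set (filter (\<lambda>i. f i \<noteq> id) [3..<n+1]) = {i \<in> {3..n}. f i \<noteq> id}"
    by auto
  finally show "length ?ts = cnt n f" unfolding cnt_def .
  show "set ?ts \<subseteq> T_gens n"
  proof
    fix h assume "h \<in> set ?ts"
    then obtain i where i: "3 \<le> i" "i \<le> n" "h = f i" "f i \<noteq> id" by auto
    then have "f i \<in> R_set i" using assms unfolding Rc_def by auto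
    then obtain k where "f i = transpose 1 2 \<circ> transpose k i" "1 \<le> k" "k < i"
      using i unfolding R_set_def by auto
    then show "h \<in> T_gens n" using i unfolding T_gens_def by auto
  qed
qed

theorem theorem4p6:
  fixes n :: nat and v :: "nat \<Rightarrow> nat" and vf :: "nat \<Rightarrow> (nat \<Rightarrow> nat)"
  assumes "n \<ge> 3"
    and "v \<in> alt_group n"
    and "\<And>i. 3 \<le> i \<Longrightarrow> i \<le> n \<Longrightarrow> vf i \<in> R_set i"
    and "v = list_prod (map vf [3..<n+1])"
  shows "card {i \<in> {3..n}. vf i \<noteq> id} = T_length n v"
proof -
  have R: "Rc n vf" using assms(3) unfolding Rc_def by auto
  from witness[OF R] obtain ts0 where ts0: "length ts0 = cnt n vf" "set ts0 \<subseteq> T_gens n" "v = list_prod ts0"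
    using assms(4) by auto
  have ex: "\<exists>k ts. length ts = k \<and> set ts \<subseteq> T_gens n \<and> v = list_prod ts"
    using ts0 by blast
  have le1: "T_length n v \<le> cnt n vf"
    unfolding T_length_def by (rule Least_le) (use ts0 in blast)
  from LeastI_ex[OF ex] obtain ts where ts: "length ts = T_length n v" "set ts \<subseteq> T_gens n" "v = list_prod ts"
    unfolding T_length_def by blast
  from stepB[OF ts(2)] obtain g where g: "Rc n g" "list_prod ts = P n g" "cnt n g \<le> length ts" by blast
  have "P n vf = P n g" using assms(4) ts(3) g(2) by simp
  then have "cnt n vf = cnt n g" using uniq[OF R g(1)] by (intro cnt_cong) auto
  then have "cnt n vf = T_length n v" using le1 g(3) ts(1) by simp
  then show ?thesis unfolding cnt_def .
qed

end
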